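(* Let $X$ be an integral regular projective curve of genus $g$ over $\mathbb{F}_q$ and let $\mathbf{n}_m=(n_0,n_1,\dots,n_m)$ ($m\ge 0$) be a tuple of positive integers. Then the $\mathbf{n}_m$-derived zeta function $\widehat\zeta^{(\mathbf{n}_m)}_X(s)$ is a rational function of $T_{\mathbf{n}_m}=q^{-n_0n_1\cdots n_m s}$; i.e. the $\mathbf{n}_m$-derived Zeta function $\widehat Z^{(\mathbf{n}_m)}_X(T_{\mathbf{n}_m})$ is a rational function of $T_{\mathbf{n}_m}$.
   Context: Let $\zeta_X(s)=\sum_{D\ge 0}N(D)^{-s}$ be the Artin zeta function of $X$ ($D$ running over effective divisors) and $\widehat\zeta_X(s)=q^{s(g-1)}\zeta_X(s)$ the complete Artin zeta function, a rational function of $q^{-s}$. Derived zeta functions are defined recursively. For the empty tuple $\mathbf{n}_{-1}=()$ put $q_{\mathbf{n}_{-1}}=q$, $T_{\mathbf{n}_{-1}}=q^{-s}$, $\widehat\zeta^{(\mathbf{n}_{-1})}_X=\widehat\zeta_X$. For a tuple $\mathbf{n}_m=(n_0,\dots,n_m)$ of positive integers ($m\ge 0$) put $\mathbf{n}_{m-1}=(n_0,\dots,n_{m-1})$, $q_{\mathbf{n}_m}=q^{n_0n_1\cdots n_m}$, $T_{\mathbf{n}_m}=q^{-n_0n_1\cdots n_m s}$. Writing $\widehat Z^{(\mathbf{n}_{m-1})}_X(T_{\mathbf{n}_{m-1}}):=\widehat\zeta^{(\mathbf{n}_{m-1})}_X(s)$ (a rational function of $T_{\mathbf{n}_{m-1}}$),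 set $\widehat\zeta^{(\mathbf{n}_{m-1})}_X(1):=\operatorname{Res}_{T_{\mathbf{n}_{m-1}}=1}\widehat Z^{(\mathbf{n}_{m-1})}_X(T_{\mathbf{n}_{m-1}})$ and for integers $N\ge 1$, $\widehat v_N:=\prod_{k=1}^{N}\widehat\zeta^{(\mathbf{n}_{m-1})}_X(k)$. Then $$\widehat\zeta^{(\mathbf{n}_m)}_X(s)=q_{\mathbf{n}_{m-1}}^{\binom{n_m}{2}(g-1)}\sum_{a=1}^{n_m}\Biggl(\sum_{\substack{k_1,\dots,k_p>0\\k_1+\cdots+k_p=n_m-a}}\frac{\widehat v_{k_1}\cdots\widehat v_{k_p}}{\prod_{j=1}^{p-1}(1-q_{\mathbf{n}_{m-1}}^{k_j+k_{j+1}})}\cdot\frac{1}{1-q_{\mathbf{n}_{m-1}}^{n_ms-n_m+a+k_p}}\Biggr)\widehat\zeta^{(\mathbf{n}_{m-1})}_X(n_ms-n_m+a)\Biggl(\sum_{\substack{l_1,\dots,l_r>0\\l_1+\cdots+l_r=a-1}}\frac{1}{1-q_{\mathbf{n}_{m-1}}^{-n_ms+n_m-a+1+l_1}}\cdot\frac{\widehat v_{l_1}\cdots\widehat v_{l_r}}{\prod_{j=1}^{r-1}(1-q_{\mathbf{n}_{m-1}}^{l_j+l_{j+1}})}\Biggr),$$ where the inner sums run over ordered tuples of positive integers (of any length) with the indicated sum, and an inner sum over tuples summing to $0$ is defined to be $1$. One writes $\widehat Z^{(\mathbf{n}_m)}_X(T_{\mathbf{n}_m}):=\widehat\zeta^{(\mathbf{n}_m)}_X(s)$.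 (For $m=0$ this is the $\mathrm{SL}_{n_0}$-zeta function of $X$, which coincides with the rank $n_0$ non-abelian zeta function of $X$.) *)

theory Defs
  imports "HOL-Complex_Analysis.Complex_Analysis" "HOL-Computational_Algebra.Polynomial"
begin

text \<open>Abstract zeta data of an integral regular projective curve X of genus g over F_q
  (Weil): Z_X(T) = P(T) / ((1 - T)(1 - q T)) with P an integer polynomial of degree 2g,
  P(0) = 1, satisfying the functional equation and the Riemann hypothesis.\<close>

definition curve_zeta_data :: "nat \<Rightarrow> nat \<Rightarrow> int poly \<Rightarrow> bool" where
  "curve_zeta_data q g P \<longleftrightarrow>
     (\<exists>p k. prime p \<and> k > 0 \<and> q = p ^ k) \<and>
     degree P = 2 * g \<and> coeff P 0 = 1 \<and>
     (\<forall>T::complex. T \<noteq> 0 \<longrightarrow>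
        poly (map_poly of_int P) T = of_nat q ^ g * T ^ (2 * g) * poly (map_poly of_int P) (1 / (of_nat q * T))) \<and>
     (\<forall>\<alpha>::complex. poly (map_poly of_int P) \<alpha> = 0 \<longrightarrow> norm \<alpha> = 1 / sqrt (real q))"

text \<open>Complete Artin zeta function as a function of T = q^(-s):
  hat Z_X(T) = T^(-(g-1)) Z_X(T), since q^(s(g-1)) = T^(-(g-1)).\<close>

definition complete_Z :: "nat \<Rightarrow> nat \<Rightarrow> int poly \<Rightarrow> complex \<Rightarrow> complex" where
  "complete_Z q g P T =
     T powi (1 - int g) * poly (map_poly of_int P) T / ((1 - T) * (1 - of_nat q * T))"

definition compositions :: "nat \<Rightarrow> nat list set" where
  "compositions N = {ks. (\<forall>k\<in>set ks. 0 < k) \<and> sum_list ks = N}"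

text \<open>Special values of the previous zeta function F (a function of T' = Q^(-s)):
  zhat(1) = Res_{T'=1} F, zhat(k) = F(Q^(-k)) for k >= 2; and v_N = prod_{k=1}^N zhat(k).\<close>

definition zeta_val :: "complex \<Rightarrow> (complex \<Rightarrow> complex) \<Rightarrow> nat \<Rightarrow> complex" where
  "zeta_val Q F k = (if k = 1 then residue F 1 else F (Q powi (- int k)))"

definition vhat :: "complex \<Rightarrow> (complex \<Rightarrow> complex) \<Rightarrow> nat \<Rightarrow> complex" where
  "vhat Q F N = (\<Prod>k=1..N. zeta_val Q F k)"

definition chain :: "complex \<Rightarrow> (complex \<Rightarrow> complex) \<Rightarrow> nat list \<Rightarrow> complex" where
  "chain Q F ks = (\<Prod>i<length ks. vhat Q F (ks ! i)) /
      (\<Prod>j<length ks - 1. (1 - Q ^ (ks ! j + ks ! (j + 1))))"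

text \<open>Left and right brackets in the recursion, written in the variable T = T_{n_m}
  (so Q^(n s) = 1/T where Q = q_{n_{m-1}}, n = n_m).\<close>

definition left_bracket ::
  "complex \<Rightarrow> (complex \<Rightarrow> complex) \<Rightarrow> nat \<Rightarrow> nat \<Rightarrow> complex \<Rightarrow> complex" where
  "left_bracket Q F n a T =
     (if n - a = 0 then 1 else
       (\<Sum>ks\<in>compositions (n - a).
          chain Q F ks * (1 / (1 - Q powi (- int n + int a + int (last ks)) / T))))"

definition right_bracket ::
  "complex \<Rightarrow> (complex \<Rightarrow> complex) \<Rightarrow> nat \<Rightarrow> nat \<Rightarrow> complex \<Rightarrow> complex" where
  "right_bracket Q F n a T =
     (if a - 1 = 0 then 1 else
       (\<Sum>ls\<in>compositions (a - 1).
          (1 / (1 - T * Q powi (int n - int a + 1 + int (hd ls)))) * chain Q F ls))"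

text \<open>One derivation step: Q = q_{n_{m-1}}, F = hat Z^{(n_{m-1})}, n = n_m.
  zeta^{(n_{m-1})}(n s - n + a) = F(Q^(n - a) * T) with T = Q^(-n s) = T_{n_m}.\<close>

definition derive_step ::
  "int \<Rightarrow> complex \<Rightarrow> nat \<Rightarrow> (complex \<Rightarrow> complex) \<Rightarrow> complex \<Rightarrow> complex" where
  "derive_step gm1 Q n F T =
     Q powi (int (n choose 2) * gm1) *
     (\<Sum>a=1..n. left_bracket Q F n a T * F (Q powi (int n - int a) * T) * right_bracket Q F n a T)"

text \<open>Derived zeta functions, indexed by the reversed tuple (last entry first).\<close>

fun derived_Z_rev :: "nat \<Rightarrow> nat \<Rightarrow> int poly \<Rightarrow> nat list \<Rightarrow> complex \<Rightarrow> complex" where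
  "derived_Z_rev q g P [] = complete_Z q g P"
| "derived_Z_rev q g P (n # ns) =
     derive_step (int g - 1) (of_nat q ^ prod_list ns) n (derived_Z_rev q g P ns)"

definition derived_Z :: "nat \<Rightarrow> nat \<Rightarrow> int poly \<Rightarrow> nat list \<Rightarrow> complex \<Rightarrow> complex" where
  "derived_Z q g P ns = derived_Z_rev q g P (rev ns)"

end

theory Submission
  imports Defs
begin

definition ratf :: "(complex \<Rightarrow> complex) \<Rightarrow> bool" where
  "ratf f \<longleftrightarrow> (\<exists>A B. B \<noteq> 0 \<and> finite {T. f T \<noteq> poly A T / poly B T})"

lemma ratf_poly: "ratf (\<lambda>T. poly p T)"
  unfolding ratf_def by (rule exI[of _ p], rule exI[of _ 1]) simp

lemma ratf_const: "ratf (\<lambda>T. c)"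
  using ratf_poly[of "[:c:]"] by simp

lemma ratf_id: "ratf (\<lambda>T. T)"
  using ratf_poly[of "[:0,1:]"] by simp

lemma ratf_cong: "ratf f \<Longrightarrow> finite {T. f T \<noteq> g T} \<Longrightarrow> ratf g"
  unfolding ratf_def
proof (elim exE conjE)
  fix A B assume B: "B \<noteq> (0::complex poly)" and f: "finite {T. f T \<noteq> poly A T / poly B T}"
    and fg: "finite {T. f T \<noteq> g T}"
  have "{T. g T \<noteq> poly A T / poly B T} \<subseteq> {T. f T \<noteq> poly A T / poly B T} \<union> {T. f T \<noteq> g T}"
    by auto
  then show "\<exists>A B. B \<noteq> 0 \<and> finite {T. g T \<noteq> poly A T / poly B T}"
    using B f fg finite_subset by blast
qed

lemma ratf_mult: assumes "ratf f" "ratf g" shows "ratf (\<lambda>T. f T * g T)"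
proof -
  obtain A B where B: "B \<noteq> 0" and f: "finite {T. f T \<noteq> poly A T / poly B T}"
    using assms(1) unfolding ratf_def by blast
  obtain C D where D: "D \<noteq> 0" and g: "finite {T. g T \<noteq> poly C T / poly D T}"
    using assms(2) unfolding ratf_def by blast
  have "{T. f T * g T \<noteq> poly (A*C) T / poly (B*D) T} \<subseteq>
        {T. f T \<noteq> poly A T / poly B T} \<union> {T. g T \<noteq> poly C T / poly D T}"
    by auto
  then have "finite {T. f T * g T \<noteq> poly (A*C) T / poly (B*D) T}"
    using f g finite_subset by blast
  moreover have "B * D \<noteq> 0" using B D by simp
  ultimately show ?thesis unfolding ratf_def by blast
qed

lemma ratf_divide: assumes "ratf f" "ratf g" shows "ratf (\<lambda>T. f T / g T)"
proof -
  obtain A B where B: "B \<noteq> 0" and f: "finite {T. f T \<noteq> poly A T / poly B T}"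
    using assms(1) unfolding ratf_def by blast
  obtain C D where D: "D \<noteq> 0" and g: "finite {T. g T \<noteq> poly C T / poly D T}"
    using assms(2) unfolding ratf_def by blast
  show ?thesis
  proof (cases "C = 0")
    case True
    have "{T. f T / g T \<noteq> 0} \<subseteq> {T. g T \<noteq> poly C T / poly D T}"
      using True by auto
    then have "finite {T. f T / g T \<noteq> poly 0 T / poly 1 T}" using g finite_subset by auto
    then show ?thesis unfolding ratf_def by (metis one_neq_zero)
  next
    case False
    have "{T. f T / g T \<noteq> poly (A*D) T / poly (B*C) T} \<subseteq>
        {T. f T \<noteq> poly A T / poly B T} \<union> {T. g T \<noteq> poly C T / poly D T}"
      by auto
    then have "finite {T. f T / g T \<noteq> poly (A*D) T / poly (B*C) T}"
      using f g finite_subset by blast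
    moreover have "B * C \<noteq> 0" using B False by simp
    ultimately show ?thesis unfolding ratf_def by blast
  qed
qed

lemma ratf_add: assumes "ratf f" "ratf g" shows "ratf (\<lambda>T. f T + g T)"
proof -
  obtain A B where B: "B \<noteq> 0" and f: "finite {T. f T \<noteq> poly A T / poly B T}"
    using assms(1) unfolding ratf_def by blast
  obtain C D where D: "D \<noteq> 0" and g: "finite {T. g T \<noteq> poly C T / poly D T}"
    using assms(2) unfolding ratf_def by blast
  have "{T. f T + g T \<noteq> poly (A*D + C*B) T / poly (B*D) T} \<subseteq>
        {T. f T \<noteq> poly A T / poly B T} \<union> {T. g T \<noteq> poly C T / poly D T}
        \<union> {T. poly B T = 0} \<union> {T. poly D T = 0}"
    by (auto simp: field_simps)
  then have "finite {T. f T + g T \<noteq> poly (A*D + C*B) T / poly (B*D) T}"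
    using f g poly_roots_finite[OF B] poly_roots_finite[OF D] finite_subset by blast
  moreover have "B * D \<noteq> 0" using B D by simp
  ultimately show ?thesis unfolding ratf_def by blast
qed

lemma ratf_diff: assumes "ratf f" "ratf g" shows "ratf (\<lambda>T. f T - g T)"
proof -
  have "ratf (\<lambda>T. f T + (-1) * g T)"
    by (intro ratf_add ratf_mult assms ratf_const)
  then show ?thesis by simp
qed

lemma ratf_sum: assumes "\<And>x. x \<in> S \<Longrightarrow> ratf (f x)" shows "ratf (\<lambda>T. \<Sum>x\<in>S. f x T)"
proof (cases "finite S")
  case True
  then show ?thesis using assms
    by (induction S rule: finite_induct) (auto intro: ratf_add ratf_const)
next
  case False
  then show ?thesis by (simp add: ratf_const)
qed

lemma ratf_power: "ratf (\<lambda>T. T ^ k)"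
  using ratf_poly[of "monom 1 k"] by (simp add: poly_monom)

lemma ratf_powi: "ratf (\<lambda>T. T powi k)"
proof (cases "k \<ge> 0")
  case True
  then show ?thesis using ratf_power[of "nat k"] by (simp add: power_int_def)
next
  case False
  then show ?thesis using ratf_divide[OF ratf_const[of 1] ratf_power[of "nat (-k)"]]
    by (simp add: power_int_def field_simps)
qed

lemma ratf_scale: assumes "ratf f" shows "ratf (\<lambda>T. f (c * T))"
proof (cases "c = 0")
  case True
  then show ?thesis by (simp add: ratf_const)
next
  case False
  obtain A B where B: "B \<noteq> 0" and f: "finite {T. f T \<noteq> poly A T / poly B T}"
    using assms(1) unfolding ratf_def by blast
  have "{T. f (c*T) \<noteq> poly (pcompose A [:0,c:]) T / poly (pcompose B [:0,c:]) T}
      = (\<lambda>T. c*T) -` {T. f T \<noteq> poly A T / poly B T}"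
    by (auto simp: poly_pcompose algebra_simps)
  moreover have "inj (\<lambda>T. c*T)" using False by (auto intro: injI)
  ultimately have "finite {T. f (c*T) \<noteq> poly (pcompose A [:0,c:]) T / poly (pcompose B [:0,c:]) T}"
    using f finite_vimageI by metis
  moreover have "pcompose B [:0,c:] \<noteq> 0" using B False pcompose_eq_0[of B "[:0,c:]"] by auto
  ultimately show ?thesis unfolding ratf_def by blast
qed

lemma ratf_left: "ratf (left_bracket Q F n a)"
proof -
  have "ratf (\<lambda>T. left_bracket Q F n a T)"
    unfolding left_bracket_def
    by (cases "n - a = 0")
      (auto intro!: ratf_const ratf_sum ratf_mult ratf_divide ratf_diff ratf_id)
  then show ?thesis by simp
qed

lemma ratf_right: "ratf (right_bracket Q F n a)"
proof -
  have "ratf (\<lambda>T. right_bracket Q F n a T)"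
    unfolding right_bracket_def
    by (cases "a - 1 = 0")
      (auto intro!: ratf_const ratf_sum ratf_mult ratf_divide ratf_diff ratf_id)
  then show ?thesis by simp
qed

lemma ratf_step: assumes "ratf F" shows "ratf (derive_step gm1 Q n F)"
proof -
  have "ratf (\<lambda>T. derive_step gm1 Q n F T)"
    unfolding derive_step_def
    by (intro ratf_mult ratf_const ratf_sum ratf_scale assms ratf_left ratf_right)
  then show ?thesis by simp
qed

lemma ratf_complete: "ratf (complete_Z q g P)"
proof -
  have "ratf (\<lambda>T. complete_Z q g P T)"
    unfolding complete_Z_def
    by (intro ratf_mult ratf_divide ratf_diff ratf_const ratf_id ratf_powi ratf_poly)
  then show ?thesis by simp
qed

lemma ratf_rev: "ratf (derived_Z_rev q g P ns)"
  by (induction ns) (auto intro: ratf_step ratf_complete)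

theorem theorem2p1:
  fixes q g :: nat and P :: "int poly" and ns :: "nat list"
  assumes "curve_zeta_data q g P"
    and "ns \<noteq> []" and "\<forall>n\<in>set ns. 0 < n"
  shows "\<exists>A B :: complex poly. B \<noteq> 0 \<and>
           finite {T. derived_Z q g P ns T \<noteq> poly A T / poly B T}"
  using ratf_rev[of q g P "rev ns"] unfolding ratf_def derived_Z_def .

end
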